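(* Let $\mathbf{a}=(a_0,a_1,\dots,a_n)$ be positive integers with $\sum_k \frac{1}{a_k}\ge 1$. Then the function $f_{\mathbf{a}}:\mathbb{R}_+\to\mathbb{Z}$, $$f_{\mathbf{a}}(x)=\sum_{k=0}^n\left(\left\lfloor \frac{x}{a_k}\right\rfloor+\left\lceil\frac{x}{a_k}\right\rceil\right)-\left(\lfloor x\rfloor+\lceil x\rceil\right),$$ attains a minimum, denoted $m(\mathbf{a})$. In particular, if $\mathbf{a}=(2,2,2,a_1,\dots,a_n)$ with $a_k$ positive integers and $n\ge 2$, then $m(\mathbf{a})\ge 2$. *)

theory Defs
  imports Complex_Main
begin

definition f_a :: "nat list \<Rightarrow> real \<Rightarrow> int" where
  "f_a a x = (\<Sum>k\<leftarrow>a. \<lfloor>x / real k\<rfloor> + \<lceil>x / real k\<rceil>) - (\<lfloor>x\<rfloor> + \<lceil>x\<rceil>)"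

definition m_a :: "nat list \<Rightarrow> int" where
  "m_a a = (LEAST v. v \<in> f_a a ` {0<..})"

end

theory Submission
  imports Defs
begin

lemma int_min_exists:
  fixes S :: "int set"
  assumes "u \<in> S" and "\<And>v. v \<in> S \<Longrightarrow> B \<le> v"
  shows "\<exists>v\<in>S. \<forall>w\<in>S. v \<le> w"
proof -
  define P where "P = (\<lambda>n::nat. B + int n \<in> S)"
  have "P (nat (u - B))" using assms unfolding P_def by force
  hence L: "P (LEAST n. P n)" by (rule LeastI)
  show ?thesis
  proof (intro bexI ballI)
    show "B + int (LEAST n. P n) \<in> S" using L P_def by simp
    fix w assume w: "w \<in> S"
    have "P (nat (w - B))" using w assms(2)[OF w] unfolding P_def by force
    hence "(LEAST n. P n) \<le> nat (w - B)" by (rule Least_le)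
    thus "B + int (LEAST n. P n) \<le> w" using assms(2)[OF w] by linarith
  qed
qed

lemma g_lower: "real_of_int (\<lfloor>t\<rfloor> + \<lceil>t\<rceil>) \<ge> 2 * t - 1"
  using floor_correct[of t] ceiling_correct[of t] by (simp only: of_int_add) linarith

lemma g_upper: "real_of_int (\<lfloor>t\<rfloor> + \<lceil>t\<rceil>) \<le> 2 * t + 1"
  using floor_correct[of t] ceiling_correct[of t] by (simp only: of_int_add) linarith

lemma sum_lower:
  "real_of_int (\<Sum>k\<leftarrow>a. \<lfloor>x / real k\<rfloor> + \<lceil>x / real k\<rceil>)
     \<ge> 2 * x * (\<Sum>k\<leftarrow>a. 1 / real k) - real (length a)"
proof (induction a)
  case Nil then show ?case by simp
next
  case (Cons k a)
  have "real_of_int (\<lfloor>x / real k\<rfloor> + \<lceil>x / real k\<rceil>) \<ge> 2 * (x / real k) - 1"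
    by (rule g_lower)
  with Cons show ?case by (simp add: algebra_simps)
qed

lemma f_lower:
  assumes "(\<Sum>k\<leftarrow>a. 1 / real k) \<ge> 1" "x > 0"
  shows "f_a a x \<ge> - int (length a) - 1"
proof -
  have A: "2 * x * (\<Sum>k\<leftarrow>a. 1 / real k) \<ge> 2 * x" using assms by simp
  have "real_of_int (f_a a x) \<ge> 2 * x * (\<Sum>k\<leftarrow>a. 1 / real k) - real (length a) - (2*x+1)"
    unfolding f_a_def using sum_lower[of x a] g_upper[of x] by simp
  with A have "real_of_int (f_a a x) \<ge> - real (length a) - 1" by linarith
  thus ?thesis by linarith
qed

lemma min_exists:
  assumes "(\<Sum>k\<leftarrow>a. 1 / real k) \<ge> 1"
  shows "\<exists>x>0. \<forall>y>0. f_a a x \<le> f_a a y"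
proof -
  have "\<exists>v\<in>f_a a ` {0<..}. \<forall>w\<in>f_a a ` {0<..}. v \<le> w"
    by (rule int_min_exists[where u = "f_a a 1" and B = "- int (length a) - 1"])
       (use f_lower[OF assms] in auto)
  thus ?thesis by auto
qed

lemma sum_ge_len:
  assumes "\<forall>k\<in>set b. k > 0" "x > 0"
  shows "(\<Sum>k\<leftarrow>b. \<lfloor>x / real k\<rfloor> + \<lceil>x / real k\<rceil>) \<ge> int (length b)"
  using assms(1)
proof (induction b)
  case Nil then show ?case by simp
next
  case (Cons k b)
  have "x / real k > 0" using Cons.prems assms(2) by simp
  hence "\<lfloor>x / real k\<rfloor> \<ge> 0" "\<lceil>x / real k\<rceil> \<ge> 1" by linarith+
  moreover have "int (length b) \<le> (\<Sum>k\<leftarrow>b. \<lfloor>x / real k\<rfloor> + \<lceil>x / real k\<rceil>)"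
    using Cons by simp
  moreover have "(\<Sum>k\<leftarrow>k#b. \<lfloor>x / real k\<rfloor> + \<lceil>x / real k\<rceil>)
     = \<lfloor>x / real k\<rfloor> + \<lceil>x / real k\<rceil> + (\<Sum>k\<leftarrow>b. \<lfloor>x / real k\<rfloor> + \<lceil>x / real k\<rceil>)" by simp
  moreover have "int (length (k#b)) = 1 + int (length b)" by simp
  ultimately show ?case by linarith
qed

lemma three_halves:
  assumes "(x::real) > 0"
  shows "3 * (\<lfloor>x / 2\<rfloor> + \<lceil>x / 2\<rceil>) \<ge> \<lfloor>x\<rfloor> + \<lceil>x\<rceil>"
proof -
  define n where "n = \<lfloor>x / 2\<rfloor>"
  have n0: "n \<ge> 0" using assms n_def by simp
  show ?thesis
  proof (cases "x / 2 = of_int n")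
    case True
    hence e: "x = of_int (2*n)" by simp
    have "\<lfloor>x\<rfloor> = 2*n" "\<lceil>x\<rceil> = 2*n" by (simp_all only: e floor_of_int ceiling_of_int)
    moreover have "\<lceil>x/2\<rceil> = n" using True by simp
    ultimately show ?thesis using n_def n0 by simp
  next
    case False
    have a0: "of_int n \<le> x/2" unfolding n_def by (rule of_int_floor_le)
    have a: "of_int n < x/2" using order_le_neq_trans[OF a0] False by auto
    have b: "x/2 < of_int n + 1" using n_def by linarith
    have c: "\<lceil>x/2\<rceil> = n + 1" using a b by (simp add: ceiling_eq_iff) 
    have f1: "\<lfloor>x\<rfloor> \<le> 2*n+1" using b by linarith
    have f2: "\<lceil>x\<rceil> \<le> 2*n+2" using b by (simp add: ceiling_le_iff)
    have eq: "3 * (\<lfloor>x / 2\<rfloor> + \<lceil>x / 2\<rceil>) = 6 * n + 3" using c n_def by simp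
    have s: "\<lfloor>x\<rfloor> + \<lceil>x\<rceil> \<le> (2*n+1) + (2*n+2)" using f1 f2 by (rule add_mono)
    have "(2*n+1) + (2*n+2) \<le> 6 * n + 3" using n0 by simp
    with s have "\<lfloor>x\<rfloor> + \<lceil>x\<rceil> \<le> 6 * n + 3" by (rule order_trans)
    then show ?thesis by (simp only: eq)
  qed
qed

theorem lemma5p6:
  fixes a :: "nat list"
  assumes "a \<noteq> []"
    and "\<forall>k\<in>set a. k > 0"
    and "(\<Sum>k\<leftarrow>a. 1 / real k) \<ge> 1"
  shows "(\<exists>x>0. \<forall>y>0. f_a a x \<le> f_a a y)
       \<and> (\<forall>b :: nat list. length b \<ge> 2 \<and> (\<forall>k\<in>set b. k > 0)
             \<longrightarrow> m_a ([2,2,2] @ b) \<ge> 2)"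
proof
  show "\<exists>x>0. \<forall>y>0. f_a a x \<le> f_a a y" using min_exists[OF assms(3)] .
  show "\<forall>b :: nat list. length b \<ge> 2 \<and> (\<forall>k\<in>set b. k > 0)
             \<longrightarrow> m_a ([2,2,2] @ b) \<ge> 2"
  proof (intro allI impI)
    fix b :: "nat list"
    assume hb: "length b \<ge> 2 \<and> (\<forall>k\<in>set b. k > 0)"
    let ?c = "[2,2,2] @ b"
    have all2: "f_a ?c x \<ge> 2" if x: "x > 0" for x
    proof -
      have "f_a ?c x = 3 * (\<lfloor>x / 2\<rfloor> + \<lceil>x / 2\<rceil>)
           + (\<Sum>k\<leftarrow>b. \<lfloor>x / real k\<rfloor> + \<lceil>x / real k\<rceil>) - (\<lfloor>x\<rfloor> + \<lceil>x\<rceil>)"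
        unfolding f_a_def by simp
      thus ?thesis using three_halves[OF x] sum_ge_len[of b x] hb x by linarith
    qed
    have S: "(\<Sum>k\<leftarrow>?c. 1 / real k) \<ge> 1"
    proof -
      have "(\<Sum>k\<leftarrow>b. 1 / real k) \<ge> 0" by (induction b) auto
      thus ?thesis by simp
    qed
    obtain x where x: "x > 0" "\<forall>y>0. f_a ?c x \<le> f_a ?c y" using min_exists[OF S] by blast
    have "m_a ?c = f_a ?c x"
      unfolding m_a_def
      by (rule Least_equality) (use x in auto)
    thus "m_a ?c \<ge> 2" using all2[OF x(1)] by simp
  qed
qed

end
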